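(* Let $G$ be a graph and $x$ an arbitrary vertex of $G$. Then there exists an L-sequence of $G$ of length $\gamma_{gr}^{L}(G)$ that contains $x$.
   Context: For a graph $G$, $N(v)$ is the open neighborhood and $N[v]=N(v)\cup\{v\}$ the closed neighborhood of $v$. A sequence $(v_1,\ldots,v_k)$ of distinct vertices is an L-sequence if $N[v_i]\setminus\bigcup_{j=1}^{i-1}N(v_j)\neq\emptyset$ for each $i\in[k]$. The L-Grundy domination number $\gamma_{gr}^{L}(G)$ is the maximum length of an L-sequence in $G$. *)

theory Defs
  imports Main
begin

definition graph :: "'a set \<Rightarrow> ('a \<Rightarrow> 'a \<Rightarrow> bool) \<Rightarrow> bool" where
  "graph V E \<longleftrightarrow> finite V \<and> (\<forall>u v. E u v \<longrightarrow> u \<in> V \<and> v \<in> V)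
     \<and> (\<forall>u v. E u v \<longrightarrow> E v u) \<and> (\<forall>v. \<not> E v v)"

definition open_nbhd :: "'a set \<Rightarrow> ('a \<Rightarrow> 'a \<Rightarrow> bool) \<Rightarrow> 'a \<Rightarrow> 'a set" where
  "open_nbhd V E v = {u \<in> V. E v u}"

definition closed_nbhd :: "'a set \<Rightarrow> ('a \<Rightarrow> 'a \<Rightarrow> bool) \<Rightarrow> 'a \<Rightarrow> 'a set" where
  "closed_nbhd V E v = insert v (open_nbhd V E v)"

text \<open>L-sequence (v_1,...,v_k), represented as a list with vs!(i) = v_{i+1}.\<close>
definition L_sequence :: "'a set \<Rightarrow> ('a \<Rightarrow> 'a \<Rightarrow> bool) \<Rightarrow> 'a list \<Rightarrow> bool" where
  "L_sequence V E vs \<longleftrightarrow> distinct vs \<and> set vs \<subseteq> V \<and>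
     (\<forall>i < length vs. closed_nbhd V E (vs ! i) - (\<Union>j<i. open_nbhd V E (vs ! j)) \<noteq> {})"

definition L_grundy_dom :: "'a set \<Rightarrow> ('a \<Rightarrow> 'a \<Rightarrow> bool) \<Rightarrow> nat" where
  "L_grundy_dom V E = Max (length ` {vs. L_sequence V E vs})"

end

theory Submission
  imports Defs
begin

lemma Lseq_len_le:
  assumes "graph V E" "L_sequence V E vs"
  shows "length vs \<le> card V"
proof -
  have "finite V" using assms(1) by (simp add: graph_def)
  moreover have "set vs \<subseteq> V" "distinct vs" using assms(2) by (auto simp: L_sequence_def)
  ultimately show ?thesis by (metis card_mono distinct_card)
qed

lemma fin_lens:
  assumes "graph V E"
  shows "finite (length ` {vs. L_sequence V E vs})"
  by (rule finite_subset[of _ "{..card V}"]) (auto dest: Lseq_len_le[OF assms])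

lemma max_ge:
  assumes "graph V E" "L_sequence V E vs"
  shows "length vs \<le> L_grundy_dom V E"
  unfolding L_grundy_dom_def using fin_lens[OF assms(1)] assms(2) by (simp add: Max_ge)

lemma max_ex:
  assumes "graph V E"
  shows "\<exists>vs. L_sequence V E vs \<and> length vs = L_grundy_dom V E"
proof -
  have "L_sequence V E []" by (simp add: L_sequence_def)
  then have "length ` {vs. L_sequence V E vs} \<noteq> {}" by blast
  from Max_in[OF fin_lens[OF assms] this] show ?thesis
    unfolding L_grundy_dom_def by auto
qed

theorem proposition6p1:
  fixes V :: "'a set" and E :: "'a \<Rightarrow> 'a \<Rightarrow> bool" and x :: 'a
  assumes "graph V E" and "x \<in> V"
  shows "\<exists>vs. L_sequence V E vs \<and> length vs = L_grundy_dom V E \<and> x \<in> set vs"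
proof -
  obtain vs where L: "L_sequence V E vs" and len: "length vs = L_grundy_dom V E"
    using max_ex[OF assms(1)] by blast
  show ?thesis
  proof (cases "x \<in> set vs")
    case True then show ?thesis using L len by blast
  next
    case False
    define k where "k = length vs"
    define U where "U i = (\<Union>j<i. open_nbhd V E (vs ! j))" for i
    define N where "N = closed_nbhd V E x"
    have xN: "x \<in> N" by (simp add: N_def closed_nbhd_def)
    have Ldef: "distinct vs" "set vs \<subseteq> V"
       "\<And>i. i < k \<Longrightarrow> closed_nbhd V E (vs ! i) - U i \<noteq> {}"
      using L by (auto simp: L_sequence_def k_def U_def)
    have A: "N \<subseteq> U k"
    proof (rule ccontr)
      assume nA: "\<not> N \<subseteq> U k"
      have "L_sequence V E (vs @ [x])"
        unfolding L_sequence_def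
      proof (intro conjI allI impI)
        show "distinct (vs @ [x])" using Ldef False by simp
        show "set (vs @ [x]) \<subseteq> V" using Ldef assms(2) by simp
        fix i assume i: "i < length (vs @ [x])"
        show "closed_nbhd V E ((vs @ [x]) ! i) - (\<Union>j<i. open_nbhd V E ((vs @ [x]) ! j)) \<noteq> {}"
        proof (cases "i < k")
          case True
          then have "(\<Union>j<i. open_nbhd V E ((vs @ [x]) ! j)) = U i"
            unfolding U_def k_def by (auto simp: nth_append)
          then show ?thesis using Ldef(3)[OF True] True by (simp add: nth_append k_def)
        next
          case False
          then have ik: "i = k" using i k_def by simp
          then have "(\<Union>j<i. open_nbhd V E ((vs @ [x]) ! j)) = U k"
            unfolding U_def k_def by (auto simp: nth_append)
          then show ?thesis using nA ik N_def by (simp add: nth_append k_def)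
        qed
      qed
      from max_ge[OF assms(1) this] len show False by simp
    qed
    have kpos: "0 < k"
    proof (rule ccontr)
      assume "\<not> 0 < k" then have "U k = {}" by (simp add: U_def)
      with A xN show False by blast
    qed
    define P where "P q \<longleftrightarrow> q < k \<and> \<not> N \<subseteq> U q" for q
    have P0: "P 0" using kpos xN by (auto simp: P_def U_def)
    define q where "q = (GREATEST q. P q)"
    have bound: "\<And>y. P y \<Longrightarrow> y \<le> k" by (simp add: P_def)
    have Pq: "P q" unfolding q_def using P0 bound by (rule GreatestI_nat)
    have qmax: "\<And>y. P y \<Longrightarrow> y \<le> q" unfolding q_def using bound by (blast intro: Greatest_le_nat)
    have qk: "q < k" and nq: "\<not> N \<subseteq> U q" using Pq by (auto simp: P_def)
    have Nsub: "N \<subseteq> U (Suc q)"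
    proof (cases "Suc q = k")
      case True then show ?thesis using A by simp
    next
      case False
      then have "\<not> P (Suc q)" using qmax by fastforce
      then show ?thesis using False qk by (simp add: P_def)
    qed
    define T where "T = vs[q := x]"
    have Tn: "\<And>j. j < k \<Longrightarrow> T ! j = (if j = q then x else vs ! j)"
      using qk by (simp add: T_def k_def)
    have LT: "L_sequence V E T"
      unfolding L_sequence_def
    proof (intro conjI allI impI)
      show "distinct T" unfolding T_def using Ldef(1) False
        by (simp add: distinct_list_update)
      show "set T \<subseteq> V" unfolding T_def using Ldef(2) assms(2) set_update_subset_insert by fastforce
      fix i assume i: "i < length T"
      then have ik: "i < k" by (simp add: T_def k_def)
      show "closed_nbhd V E (T ! i) - (\<Union>j<i. open_nbhd V E (T ! j)) \<noteq> {}"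
      proof (cases "i \<le> q")
        case True
        then have eqU: "(\<Union>j<i. open_nbhd V E (T ! j)) = U i"
          unfolding U_def using Tn ik by auto
        show ?thesis
        proof (cases "i = q")
          case True
          then show ?thesis using eqU nq Tn ik by (simp add: N_def)
        next
          case False
          then show ?thesis using eqU Ldef(3)[OF ik] Tn ik by simp
        qed
      next
        case False
        have "open_nbhd V E x \<subseteq> U i"
        proof -
          have "open_nbhd V E x \<subseteq> N" by (auto simp: N_def closed_nbhd_def)
          also have "\<dots> \<subseteq> U (Suc q)" by (rule Nsub)
          also have "\<dots> \<subseteq> U i" using False unfolding U_def by (force intro: less_le_trans)
          finally show ?thesis .
        qed
        then have "(\<Union>j<i. open_nbhd V E (T ! j)) \<subseteq> U i"
        proof -
          assume ox: "open_nbhd V E x \<subseteq> U i"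
          have "open_nbhd V E (T ! j) \<subseteq> U i" if "j < i" for j
          proof (cases "j = q")
            case True then show ?thesis using ox Tn[of j] that ik by simp
          next
            case False then show ?thesis using Tn[of j] that ik unfolding U_def by auto
          qed
          then show ?thesis by blast
        qed
        then show ?thesis using Ldef(3)[OF ik] Tn ik False by auto
      qed
    qed
    have "x \<in> set T" using qk by (simp add: T_def k_def set_update_memI)
    moreover have "length T = L_grundy_dom V E" using len by (simp add: T_def)
    ultimately show ?thesis using LT by blast
  qed
qed

end
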